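(* Let $\Omega$ be strictly convex, and consider a family of meshes with $\mathbb h\to0$ (with stencil sizes satisfying (K1)–(K3)) and the corresponding discrete solutions $u_h$. Define for $x\in\overline\Omega$ the envelopes $\overline u(x)=\limsup_{y\to x,\ \mathbb h\to0}u_h(y)$ and $\underline u(x)=\liminf_{y\to x,\ \mathbb h\to0}u_h(y)$ (with $y\in\overline\Omega$). Then $\overline u(x)=\underline u(x)=g(x)$ for all $x\in\partial\Omega$.
   Context: Standing setting: $d\ge2$, $\Omega\subset\mathbb R^d$ a bounded open strictly convex domain, $f:\Omega\to[0,\infty)$ bounded and continuous, $g:\partial\Omega\to\mathbb R$ bounded and continuous. $\mathbb S$: real symmetric $d\times d$ matrices; $\mathbb S_+$: positive semidefinite ones; $\mathbb S_1=\{B\in\mathbb S_+:\operatorname{tr}B=1\}$. Mesh: $\mathcal T_h$ is a shape-regular simplicial partition whose union $\Omega_h$ satisfies $\Omega_h\subset\Omega$; its nodes are $\mathcal N_h=\mathcal N_h^I\cup\mathcal N_h^B$, where the boundary nodes $\mathcal N_h^B$ (nodes on $\partial\Omega_h$) lie on $\partial\Omega$ and $\mathcal N_h^I$ are the interior nodes. The mesh function $h$ is the upper semicontinuous function with $h(x)=\operatorname{diam}T$ for $x$ in the interior of $T\in\mathcal T_h$ (on element boundaries, the largest diameter of the adjacent elements), and $\mathbb h=\|h\|_{L^\infty}$ is the maximal element diameter. $V_h$ is the space of continuous piecewise linear functions on $\mathcal T_h$; functions on $\Omega_h$ (in particular elements of $V_h$) are extended to $\overline\Omega$ by being constant along the outer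 normal directions of $\partial\Omega_h$. $B(\overline\Omega)$ denotes the bounded real functions on $\overline\Omega$. Controls: $\mathbf F\subset\mathbb R^{d\times d}\times\{\text{diagonal }d\times d\text{ matrices}\}$ is compact, the map $(\sigma,\lambda)\mapsto\sigma\lambda\sigma^T$ is a bijection from $\mathbf F$ onto $\mathbb S_1$, and every $\lambda$ occurring in $\mathbf F$ has nonnegative diagonal entries and the same trace $C>0$. For $B\in\mathbb S_1$, $(\sigma(B),\lambda(B))$ denotes its preimage; $\sigma_j$ is the $j$th column of $\sigma$ and $\lambda_j$ the $j$th diagonal entry of $\lambda$. Stencil size: $k=k(h,x)>0$ is such that $x\pm k(h,x)\sigma_j\in\overline\Omega_h$ for every $x\in\Omega_h$ and every column $\sigma_j$ of every $\sigma$ with $(\sigma,\lambda)\in\mathbf F$. With $\Omega_i=\{x\in\Omega:\operatorname{dist}(x,\partial\Omega)>1/i\}$: (K1) for each $i\in\mathbb N$, $\sup_{x\in\Omega_i}h(x)/k(h,x)\to0$ as $\mathbb h\to0$; (K2) for each $i$ there is $h'>0$ such that $x\mapsto k(h,x)$ is constant on $\Omega_i$ whenever $\mathbb h<h'$; (K3) $\sup_{x\in\Omega}k(h,x)\to0$ as $\mathbb h\to0$. Scheme: for $B\in\mathbb S_1$, $s\in\mathbb R$, $\phi\in B(\overline\Omega)$, with $(\sigma,\lambda)=(\sigma(B),\lambda(B))$ and $k=k(h,x_i)$, set $L_h^B(s,\phi)(x_i)=-\sum_{j=1}^d\lambda_j\frac{\phi(x_i-k\sigma_j)-2s+\phi(x_i+k\sigma_j)}{k^2}+f(x_i)\sqrt[d]{\det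 B}$ for $x_i\in\mathcal N_h^I$, and $L_h^B(s,\phi)(x_i)=s-g(x_i)$ for $x_i\in\mathcal N_h^B$; $H_h(s,\phi)(x_i)=\sup_{B\in\mathbb S_1}L_h^B(s,\phi)(x_i)$. The discrete solution $u_h\in V_h$ is the (unique) function with $H_h(u_h(x_i),u_h)(x_i)=0$ for all $x_i\in\mathcal N_h$. *)

theory Defs
  imports "HOL-Analysis.Analysis" "HOL-Library.Liminf_Limsup"
begin

definition strictly_convex_domain :: "(real^'n) set \<Rightarrow> bool" where
  "strictly_convex_domain \<Omega> \<longleftrightarrow> \<Omega> \<noteq> {} \<and> open \<Omega> \<and> bounded \<Omega> \<and>
     (\<forall>x\<in>closure \<Omega>. \<forall>y\<in>closure \<Omega>. x \<noteq> y \<longrightarrow>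
        (\<forall>t::real. 0 < t \<and> t < 1 \<longrightarrow> (1 - t) *\<^sub>R x + t *\<^sub>R y \<in> \<Omega>))"

definition inner_layer :: "(real^'n) set \<Rightarrow> nat \<Rightarrow> (real^'n) set" where
  "inner_layer \<Omega> i = {x \<in> \<Omega>. infdist x (frontier \<Omega>) > 1 / real i}"

text \<open>A mesh is represented by the set of vertex sets of its simplices.\<close>
definition simplex_verts :: "(real^'n) set \<Rightarrow> bool" where
  "simplex_verts V \<longleftrightarrow> finite V \<and> card V = CARD('n) + 1 \<and> \<not> affine_dependent V"

definition simplicial_partition :: "(real^'n) set set \<Rightarrow> bool" where
  "simplicial_partition \<T> \<longleftrightarrow> finite \<T> \<and> (\<forall>V\<in>\<T>. simplex_verts V) \<and>
     (\<forall>V\<in>\<T>. \<forall>W\<in>\<T>. convex hull V \<inter> convex hull W = convex hull (V \<inter> W))"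

definition mesh_domain :: "(real^'n) set set \<Rightarrow> (real^'n) set" where
  "mesh_domain \<T> = (\<Union>V\<in>\<T>. convex hull V)"

definition nodes :: "(real^'n) set set \<Rightarrow> (real^'n) set" where
  "nodes \<T> = \<Union>\<T>"

definition bnodes :: "(real^'n) set set \<Rightarrow> (real^'n) set" where
  "bnodes \<T> = nodes \<T> \<inter> frontier (mesh_domain \<T>)"

definition inodes :: "(real^'n) set set \<Rightarrow> (real^'n) set" where
  "inodes \<T> = nodes \<T> - frontier (mesh_domain \<T>)"

definition mesh_fun :: "(real^'n) set set \<Rightarrow> real^'n \<Rightarrow> real" where
  "mesh_fun \<T> x = Max (insert 0 {diameter (convex hull V) | V. V \<in> \<T> \<and> x \<in> convex hull V})"

definition mesh_size :: "(real^'n) set set \<Rightarrow> real" where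
  "mesh_size \<T> = Max (insert 0 {diameter (convex hull V) | V. V \<in> \<T>})"

definition inradius :: "(real^'n) set \<Rightarrow> real" where
  "inradius S = Sup {r. \<exists>z. ball z r \<subseteq> S}"

definition shape_regular :: "(nat \<Rightarrow> (real^'n) set set) \<Rightarrow> bool" where
  "shape_regular T \<longleftrightarrow> (\<exists>c. \<forall>m. \<forall>V\<in>T m. diameter (convex hull V) \<le> c * inradius (convex hull V))"

definition in_Vh :: "(real^'n) set set \<Rightarrow> (real^'n \<Rightarrow> real) \<Rightarrow> bool" where
  "in_Vh \<T> \<phi> \<longleftrightarrow> continuous_on (mesh_domain \<T>) \<phi> \<and>
     (\<forall>V\<in>\<T>. \<exists>a b. \<forall>x\<in>convex hull V. \<phi> x = a \<bullet> x + b)"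

text \<open>Extension to the closure of Omega, constant along outer normals of the mesh domain,
realised via the nearest-point projection onto the mesh domain.\<close>
definition mesh_ext :: "(real^'n) set set \<Rightarrow> (real^'n \<Rightarrow> real) \<Rightarrow> real^'n \<Rightarrow> real" where
  "mesh_ext \<T> \<phi> y = \<phi> (closest_point (mesh_domain \<T>) y)"

definition psd :: "real^'n^'n \<Rightarrow> bool" where
  "psd B \<longleftrightarrow> transpose B = B \<and> (\<forall>v. 0 \<le> v \<bullet> (B *v v))"

definition S1 :: "(real^'n^'n) set" where
  "S1 = {B. psd B \<and> trace B = 1}"

definition diagonal_mat :: "real^'n^'n \<Rightarrow> bool" where
  "diagonal_mat L \<longleftrightarrow> (\<forall>i j. i \<noteq> j \<longrightarrow> L $ i $ j = 0)"

definition ctrl_map :: "(real^'n^'n) \<times> (real^'n^'n) \<Rightarrow> real^'n^'n" where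
  "ctrl_map p = fst p ** snd p ** transpose (fst p)"

definition admissible_controls :: "((real^'n^'n) \<times> (real^'n^'n)) set \<Rightarrow> real \<Rightarrow> bool" where
  "admissible_controls F C \<longleftrightarrow> compact F \<and> C > 0 \<and> bij_betw ctrl_map F S1 \<and>
     (\<forall>(sig, lam)\<in>F. diagonal_mat lam \<and> (\<forall>j. lam $ j $ j \<ge> 0) \<and> trace lam = C)"

definition ctrl_of :: "((real^'n^'n) \<times> (real^'n^'n)) set \<Rightarrow> real^'n^'n \<Rightarrow> (real^'n^'n) \<times> (real^'n^'n)" where
  "ctrl_of F B = the_inv_into F ctrl_map B"

definition scheme_L ::
  "((real^'n^'n) \<times> (real^'n^'n)) set \<Rightarrow> (real^'n \<Rightarrow> real) \<Rightarrow> (real^'n \<Rightarrow> real) \<Rightarrow>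
   (real^'n) set set \<Rightarrow> (real^'n \<Rightarrow> real) \<Rightarrow> real^'n^'n \<Rightarrow> real \<Rightarrow> (real^'n \<Rightarrow> real) \<Rightarrow> real^'n \<Rightarrow> real" where
  "scheme_L F f g \<T> k B s \<phi> x =
     (let sig = fst (ctrl_of F B); lam = snd (ctrl_of F B); kk = k x in
      if x \<in> inodes \<T> then
        - (\<Sum>j\<in>UNIV. lam $ j $ j *
             (\<phi> (x - kk *\<^sub>R column j sig) - 2 * s + \<phi> (x + kk *\<^sub>R column j sig)) / kk\<^sup>2)
        + f x * root CARD('n) (det B)
      else s - g x)"

definition scheme_H ::
  "((real^'n^'n) \<times> (real^'n^'n)) set \<Rightarrow> (real^'n \<Rightarrow> real) \<Rightarrow> (real^'n \<Rightarrow> real) \<Rightarrow>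
   (real^'n) set set \<Rightarrow> (real^'n \<Rightarrow> real) \<Rightarrow> real \<Rightarrow> (real^'n \<Rightarrow> real) \<Rightarrow> real^'n \<Rightarrow> real" where
  "scheme_H F f g \<T> k s \<phi> x = (SUP B\<in>S1. scheme_L F f g \<T> k B s \<phi> x)"

definition discrete_solution ::
  "((real^'n^'n) \<times> (real^'n^'n)) set \<Rightarrow> (real^'n \<Rightarrow> real) \<Rightarrow> (real^'n \<Rightarrow> real) \<Rightarrow>
   (real^'n) set set \<Rightarrow> (real^'n \<Rightarrow> real) \<Rightarrow> (real^'n \<Rightarrow> real) \<Rightarrow> bool" where
  "discrete_solution F f g \<T> k u \<longleftrightarrow> in_Vh \<T> u \<and>
     (\<forall>x\<in>nodes \<T>. scheme_H F f g \<T> k (u x) (mesh_ext \<T> u) x = 0)"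

end

theory Submission
  imports Defs
begin

lemma sqnorm_convex_comb:
  fixes a b :: "'a::real_inner"
  assumes "u + v = 1"
  shows "(norm (u *\<^sub>R a + v *\<^sub>R b))\<^sup>2 = u * (norm a)\<^sup>2 + v * (norm b)\<^sup>2 - u * v * (norm (a - b))\<^sup>2"
proof -
  have v: "v = 1 - u" using assms by simp
  show ?thesis unfolding power2_norm_eq_inner v
    by (simp add: inner_add_left inner_add_right inner_diff_left inner_diff_right inner_commute algebra_simps)
qed

lemma quad_convex:
  fixes z :: "'a::real_inner"
  assumes "A \<ge> 0"
  shows "convex_on S (\<lambda>y. c + inner b y + A * (norm (y - z))\<^sup>2) \<longleftrightarrow> convex S"
proof
  assume cS: "convex S"
  show "convex_on S (\<lambda>y. c + inner b y + A * (norm (y - z))\<^sup>2)"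
    unfolding convex_on_def
  proof (intro conjI cS ballI allI impI)
    fix x y u v :: 'a fix u v :: real
    assume "0 \<le> u" "0 \<le> v" "u + v = 1"
    have e: "u *\<^sub>R x + v *\<^sub>R y - z = u *\<^sub>R (x - z) + v *\<^sub>R (y - z)"
      using \<open>u+v=1\<close> by (simp add: algebra_simps flip: scaleR_add_left)
    have q: "(norm (u *\<^sub>R x + v *\<^sub>R y - z))\<^sup>2 \<le> u * (norm (x - z))\<^sup>2 + v * (norm (y - z))\<^sup>2"
      unfolding e sqnorm_convex_comb[OF \<open>u+v=1\<close>] using \<open>0 \<le> u\<close> \<open>0 \<le> v\<close> by simp
    have l: "inner b (u *\<^sub>R x + v *\<^sub>R y) = u * inner b x + v * inner b y"
      by (simp add: inner_add_right)
    have "c = u * c + v * c" using \<open>u+v=1\<close> by (metis distrib_right mult_1)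
    then show "c + inner b (u *\<^sub>R x + v *\<^sub>R y) + A * (norm (u *\<^sub>R x + v *\<^sub>R y - z))\<^sup>2
          \<le> u * (c + inner b x + A * (norm (x - z))\<^sup>2) + v * (c + inner b y + A * (norm (y - z))\<^sup>2)"
      using mult_left_mono[OF q assms] l by (simp add: algebra_simps)
  qed
qed (simp add: convex_on_def)

lemma second_diff_quad:
  fixes z :: "'a::real_inner"
  shows "(c + inner b (x - t *\<^sub>R s) + A * (norm (x - t *\<^sub>R s - z))\<^sup>2)
     - 2 * (c + inner b x + A * (norm (x - z))\<^sup>2)
     + (c + inner b (x + t *\<^sub>R s) + A * (norm (x + t *\<^sub>R s - z))\<^sup>2) = 2 * A * t\<^sup>2 * (norm s)\<^sup>2"
  unfolding power2_norm_eq_inner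
  by (simp add: inner_add_left inner_add_right inner_diff_left inner_diff_right inner_commute algebra_simps power2_eq_square)

lemma trace_ctrl:
  fixes sig lam :: "real^'n^'n"
  assumes "diagonal_mat lam"
  shows "trace (sig ** lam ** transpose sig) = (\<Sum>j\<in>UNIV. lam$j$j * (norm (column j sig))\<^sup>2)"
proof -
  have d: "\<And>i l. (sig ** lam)$i$l = sig$i$l * lam$l$l"
  proof -
    fix i l
    have "(sig ** lam)$i$l = (\<Sum>k\<in>UNIV. sig$i$k * lam$k$l)" by (simp add: matrix_matrix_mult_def)
    also have "\<dots> = (\<Sum>k\<in>UNIV. if k = l then sig$i$l * lam$l$l else 0)"
      using assms unfolding diagonal_mat_def by (intro sum.cong) auto
    finally show "(sig ** lam)$i$l = sig$i$l * lam$l$l" by simp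
  qed
  have "trace (sig ** lam ** transpose sig) = (\<Sum>i\<in>UNIV. \<Sum>l\<in>UNIV. sig$i$l * lam$l$l * sig$i$l)"
  proof -
    have "\<And>i. (sig ** lam ** transpose sig)$i$i = (\<Sum>l\<in>UNIV. (sig ** lam)$i$l * sig$i$l)"
      by (simp add: matrix_matrix_mult_def[of "sig ** lam"] transpose_def)
    then show ?thesis by (simp add: trace_def d)
  qed
  also have "\<dots> = (\<Sum>l\<in>UNIV. \<Sum>i\<in>UNIV. sig$i$l * lam$l$l * sig$i$l)" by (rule sum.swap)
  also have "\<dots> = (\<Sum>j\<in>UNIV. lam$j$j * (norm (column j sig))\<^sup>2)"
    by (simp add: power2_norm_eq_inner inner_vec_def column_def sum_distrib_left algebra_simps)
  finally show ?thesis .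
qed

lemma mesh_basic:
  assumes "simplicial_partition T"
  shows "finite T" "\<forall>V\<in>T. finite V" "compact (mesh_domain T)" "nodes T \<subseteq> mesh_domain T"
    "finite (nodes T)"
proof -
  show fT: "finite T" and fV: "\<forall>V\<in>T. finite V"
    using assms by (auto simp: simplicial_partition_def simplex_verts_def)
  show "compact (mesh_domain T)" unfolding mesh_domain_def
    using fT fV by (intro compact_UN finite_imp_compact_convex_hull) auto
  show "nodes T \<subseteq> mesh_domain T" unfolding nodes_def mesh_domain_def
    using hull_subset by fastforce
  show "finite (nodes T)" unfolding nodes_def using fT fV by auto
qed

lemma max_at_node:
  fixes \<psi> :: "'a::real_vector \<Rightarrow> real"
  assumes fT: "finite T" and fV: "\<forall>V\<in>T. finite V" and ne: "(\<Union>V\<in>T. convex hull V) \<noteq> {}"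
    and cv: "\<forall>V\<in>T. \<exists>q. convex_on (convex hull V) q \<and> (\<forall>y\<in>convex hull V. \<psi> y = q y)"
  shows "\<exists>x\<in>\<Union>T. \<forall>y\<in>(\<Union>V\<in>T. convex hull V). \<psi> y \<le> \<psi> x"
proof -
  have fN: "finite (\<Union>T)" using fT fV by auto
  have nN: "\<Union>T \<noteq> {}" using ne by auto
  define M where "M = Max (\<psi> ` \<Union>T)"
  have "M \<in> \<psi> ` \<Union>T" unfolding M_def using Max_in[OF finite_imageI[OF fN], of \<psi>] nN by simp
  then obtain x where x: "x \<in> \<Union>T" "\<psi> x = M" by blast
  have "\<psi> y \<le> M" if y: "y \<in> (\<Union>V\<in>T. convex hull V)" for y
  proof -
    obtain V where V: "V \<in> T" "y \<in> convex hull V" using y by auto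
    obtain q where q: "convex_on (convex hull V) q" "\<forall>y\<in>convex hull V. \<psi> y = q y"
      using bspec[OF cv V(1)] by auto
    have "\<forall>w\<in>V. q w \<le> M"
    proof
      fix w assume "w \<in> V"
      then have "q w = \<psi> w" using q(2) hull_inc[of w V convex] by simp
      also have "\<dots> \<le> M" unfolding M_def using fN \<open>w\<in>V\<close> V(1) by (intro Max_ge finite_imageI imageI) auto
      finally show "q w \<le> M" .
    qed
    then have "q y \<le> M" using convex_on_convex_hull_bound[OF q(1)] V by blast
    then show ?thesis using q(2) V by simp
  qed
  then show ?thesis using x by auto
qed

lemma frontier_closed_set:
  assumes "closed S" "x \<in> S" "x \<notin> frontier S"
  shows "x \<in> interior S"
  using assms by (simp add: frontier_def closure_closed)

lemma scheme_L_inode: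
  fixes T :: "(real^'n) set set"
  assumes "x \<in> inodes T"
  shows "scheme_L F f g T kk B s \<phi> x =
     - (\<Sum>j\<in>UNIV. snd (ctrl_of F B) $ j $ j *
             (\<phi> (x - kk x *\<^sub>R column j (fst (ctrl_of F B))) - 2 * s + \<phi> (x + kk x *\<^sub>R column j (fst (ctrl_of F B)))) / (kk x)\<^sup>2)
        + f x * root CARD('n) (det B)"
  unfolding scheme_L_def Let_def using assms by (simp only: if_True)

lemma scheme_L_bnode:
  assumes "x \<notin> inodes T"
  shows "scheme_L F f g T kk B s \<phi> x = s - g x"
  unfolding scheme_L_def Let_def using assms by (simp only: if_False)

lemma interior_node:
  fixes T :: "(real^'n) set set"
  assumes part: "simplicial_partition T" and x: "x \<in> inodes T"
  shows "x \<in> interior (mesh_domain T)" "x \<in> nodes T"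
proof -
  have "closed (mesh_domain T)" using mesh_basic(3)[OF part] compact_imp_closed by blast
  moreover have "x \<in> nodes T" "x \<notin> frontier (mesh_domain T)" using x by (auto simp: inodes_def)
  moreover have "x \<in> mesh_domain T" using mesh_basic(4)[OF part] calculation(2) by blast
  ultimately show "x \<in> interior (mesh_domain T)" "x \<in> nodes T" using frontier_closed_set by blast+
qed

lemma bnode_val:
  fixes T :: "(real^'n) set set"
  assumes x: "x \<in> nodes T" "x \<notin> inodes T" and S1ne: "(S1::(real^'n^'n) set) \<noteq> {}"
    and H: "scheme_H F f g T kk (u x) (mesh_ext T u) x = 0"
  shows "u x = g x" "x \<in> bnodes T"
proof -
  have "scheme_H F f g T kk (u x) (mesh_ext T u) x = u x - g x"
    unfolding scheme_H_def scheme_L_bnode[OF x(2)] using S1ne by simp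
  then show "u x = g x" using H by simp
  show "x \<in> bnodes T" using x by (auto simp: inodes_def bnodes_def)
qed

lemma stencil_ext:
  assumes "y \<in> mesh_domain T"
  shows "mesh_ext T u y = u y"
  using assms by (simp add: mesh_ext_def closest_point_self)

lemma lower_cmp:
  fixes T :: "(real^'n) set set" and u v :: "real^'n \<Rightarrow> real" and F :: "((real^'n^'n) \<times> (real^'n^'n)) set"
  assumes part: "simplicial_partition T"
  and Vh: "in_Vh T u"
  and H0: "\<forall>x\<in>nodes T. scheme_H F f g T kk (u x) (mesh_ext T u) x = 0"
  and kpos: "\<forall>x\<in>\<Omega>. kk x > 0"
  and sten: "\<forall>x\<in>interior (mesh_domain T). \<forall>(sig, lam)\<in>F. \<forall>j.
                      x + kk x *\<^sub>R column j sig \<in> mesh_domain T \<and>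
                      x - kk x *\<^sub>R column j sig \<in> mesh_domain T"
  and intD: "interior (mesh_domain T) \<subseteq> \<Omega>"
  and bn: "bnodes T \<subseteq> frontier \<Omega>"
  and S1ne: "(S1::(real^'n^'n) set) \<noteq> {}"
  and cof: "\<forall>B\<in>S1. ctrl_of F B \<in> F \<and> ctrl_map (ctrl_of F B) = B"
  and Fdiag: "\<forall>(sig, lam)\<in>F. diagonal_mat lam \<and> (\<forall>j. lam$j$j \<ge> 0)"
  and vdef: "\<And>y. v y = c + inner b y + A * (norm (y - z))\<^sup>2"
  and fQ: "\<forall>x\<in>\<Omega>. \<forall>B\<in>(S1::(real^'n^'n) set). f x * root CARD('n) (det B) \<le> Q" and QA: "Q < 2 * A" and A0: "A \<ge> 0"
  and vg: "\<forall>y\<in>frontier \<Omega>. v y \<le> g y"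
  shows "\<forall>y\<in>mesh_domain T. v y \<le> u y"
proof (cases "mesh_domain T = {}")
  case True then show ?thesis by simp
next
  case False
  note mb = mesh_basic[OF part]
  have "\<exists>x\<in>\<Union>T. \<forall>y\<in>(\<Union>V\<in>T. convex hull V). v y - u y \<le> v x - u x"
  proof (rule max_at_node)
    show "finite T" "\<forall>V\<in>T. finite V" using mb by auto
    show "(\<Union>V\<in>T. convex hull V) \<noteq> {}" using False by (simp add: mesh_domain_def)
    show "\<forall>V\<in>T. \<exists>q. convex_on (convex hull V) q \<and> (\<forall>y\<in>convex hull V. v y - u y = q y)"
    proof
      fix V assume V: "V \<in> T"
      obtain a \<beta> where ab: "\<forall>y\<in>convex hull V. u y = inner a y + \<beta>"
        using Vh V unfolding in_Vh_def by blast
      show "\<exists>q. convex_on (convex hull V) q \<and> (\<forall>y\<in>convex hull V. v y - u y = q y)"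
      proof (intro exI conjI)
        show "convex_on (convex hull V) (\<lambda>y. (c - \<beta>) + inner (b - a) y + A * (norm (y - z))\<^sup>2)"
          using quad_convex[OF A0] convex_convex_hull by blast
        show "\<forall>y\<in>convex hull V. v y - u y = (c - \<beta>) + inner (b - a) y + A * (norm (y - z))\<^sup>2"
          using ab by (simp add: vdef inner_diff_left)
      qed
    qed
  qed
  then obtain x where xN: "x \<in> nodes T" and xmax: "\<forall>y\<in>mesh_domain T. v y - u y \<le> v x - u x"
    by (auto simp: nodes_def mesh_domain_def)
  have "v x - u x \<le> 0"
  proof (cases "x \<in> inodes T")
    case False
    then have "u x = g x" "x \<in> bnodes T" using bnode_val[OF xN False S1ne] H0 xN by auto
    then show ?thesis using vg bn by auto
  next
    case True
    have xi: "x \<in> interior (mesh_domain T)" using interior_node[OF part True] by simp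
    have xO: "x \<in> \<Omega>" using xi intD by blast
    have kx: "kk x > 0" using kpos xO by blast
    have "scheme_L F f g T kk B (u x) (mesh_ext T u) x \<le> Q - 2 * A" if B: "B \<in> S1" for B
    proof -
      obtain sig lam where p: "ctrl_of F B = (sig, lam)" by (cases "ctrl_of F B")
      have pF: "(sig, lam) \<in> F" and cm: "ctrl_map (sig, lam) = B" using cof B p by auto
      have dg: "diagonal_mat lam" and lnn: "\<And>j. lam$j$j \<ge> 0" using Fdiag pF by auto
      have tr: "(\<Sum>j\<in>UNIV. lam$j$j * (norm (column j sig))\<^sup>2) = 1"
        using trace_ctrl[OF dg, of sig] cm B by (simp add: ctrl_map_def S1_def)
      let ?p = "\<lambda>j. x + kk x *\<^sub>R column j sig" and ?m = "\<lambda>j. x - kk x *\<^sub>R column j sig"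
      have inD: "?p j \<in> mesh_domain T" "?m j \<in> mesh_domain T" for j
        using bspec[OF bspec[OF sten xi] pF] by auto
      have tm: "lam$j$j * (2 * A * (norm (column j sig))\<^sup>2) \<le>
          lam$j$j * (mesh_ext T u (?m j) - 2 * u x + mesh_ext T u (?p j)) / (kk x)\<^sup>2" for j
      proof -
        have "v (?m j) - u (?m j) \<le> v x - u x" "v (?p j) - u (?p j) \<le> v x - u x"
          using xmax inD by auto
        moreover have "v (?m j) - 2 * v x + v (?p j) = 2 * A * (kk x)\<^sup>2 * (norm (column j sig))\<^sup>2"
          unfolding vdef by (rule second_diff_quad)
        ultimately have "2 * A * (kk x)\<^sup>2 * (norm (column j sig))\<^sup>2 \<le> u (?m j) - 2 * u x + u (?p j)"
          by linarith
        then have "2 * A * (norm (column j sig))\<^sup>2 \<le> (u (?m j) - 2 * u x + u (?p j)) / (kk x)\<^sup>2"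
          using kx by (simp add: field_simps)
        from mult_left_mono[OF this lnn[of j]]
        show ?thesis using inD[of j] by (simp add: stencil_ext)
      qed
      have "(\<Sum>j\<in>UNIV. lam$j$j * (2 * A * (norm (column j sig))\<^sup>2)) =
          2 * A * (\<Sum>j\<in>UNIV. lam$j$j * (norm (column j sig))\<^sup>2)"
        by (simp add: sum_distrib_left mult.left_commute)
      then have "2 * A = (\<Sum>j\<in>UNIV. lam$j$j * (2 * A * (norm (column j sig))\<^sup>2))"
        using tr by simp
      also have "\<dots> \<le> (\<Sum>j\<in>UNIV. lam$j$j * (mesh_ext T u (?m j) - 2 * u x + mesh_ext T u (?p j)) / (kk x)\<^sup>2)"
        by (rule sum_mono) (rule tm)
      finally have S: "2 * A \<le> \<dots>" .
      have "f x * root CARD('n) (det B) \<le> Q" using bspec[OF bspec[OF fQ xO] B] .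
      then show ?thesis unfolding scheme_L_inode[OF True] p using S by simp
    qed
    then have "scheme_H F f g T kk (u x) (mesh_ext T u) x \<le> Q - 2 * A"
      unfolding scheme_H_def using S1ne by (intro cSUP_least) auto
    then show ?thesis using H0 xN QA by auto
  qed
  then show ?thesis using xmax by auto
qed

lemma upper_cmp:
  fixes T :: "(real^'n) set set" and u w :: "real^'n \<Rightarrow> real" and F :: "((real^'n^'n) \<times> (real^'n^'n)) set"
  assumes part: "simplicial_partition T"
  and Vh: "in_Vh T u"
  and H0: "\<forall>x\<in>nodes T. scheme_H F f g T kk (u x) (mesh_ext T u) x = 0"
  and kpos: "\<forall>x\<in>\<Omega>. kk x > 0"
  and sten: "\<forall>x\<in>interior (mesh_domain T). \<forall>(sig, lam)\<in>F. \<forall>j.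
                      x + kk x *\<^sub>R column j sig \<in> mesh_domain T \<and>
                      x - kk x *\<^sub>R column j sig \<in> mesh_domain T"
  and intD: "interior (mesh_domain T) \<subseteq> \<Omega>"
  and bn: "bnodes T \<subseteq> frontier \<Omega>"
  and S1ne: "(S1::(real^'n^'n) set) \<noteq> {}"
  and cof: "\<forall>B\<in>S1. ctrl_of F B \<in> F \<and> ctrl_map (ctrl_of F B) = B"
  and Fdiag: "\<forall>(sig, lam)\<in>F. diagonal_mat lam \<and> (\<forall>j. lam$j$j \<ge> 0 \<and> lam$j$j \<le> C)"
  and wdef: "\<And>y. w y = c + inner b y - A * (norm (y - z))\<^sup>2"
  and A0: "A > 0"
  and fpos: "\<forall>x\<in>\<Omega>. f x \<ge> 0"
  and Bzero: "Bzero \<in> (S1::(real^'n^'n) set)" "det Bzero \<ge> 0"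
  and Rb: "\<forall>B\<in>(S1::(real^'n^'n) set). \<bar>root CARD('n) (det B)\<bar> \<le> R"
  and wg: "\<forall>y\<in>frontier \<Omega>. g y \<le> w y"
  shows "\<forall>y\<in>mesh_domain T. u y \<le> w y"
proof (cases "mesh_domain T = {}")
  case True then show ?thesis by simp
next
  case False
  note mb = mesh_basic[OF part]
  have "\<exists>x\<in>\<Union>T. \<forall>y\<in>(\<Union>V\<in>T. convex hull V). u y - w y \<le> u x - w x"
  proof (rule max_at_node)
    show "finite T" "\<forall>V\<in>T. finite V" using mb by auto
    show "(\<Union>V\<in>T. convex hull V) \<noteq> {}" using False by (simp add: mesh_domain_def)
    show "\<forall>V\<in>T. \<exists>q. convex_on (convex hull V) q \<and> (\<forall>y\<in>convex hull V. u y - w y = q y)"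
    proof
      fix V assume V: "V \<in> T"
      obtain a \<beta> where ab: "\<forall>y\<in>convex hull V. u y = inner a y + \<beta>"
        using Vh V unfolding in_Vh_def by blast
      show "\<exists>q. convex_on (convex hull V) q \<and> (\<forall>y\<in>convex hull V. u y - w y = q y)"
      proof (intro exI conjI)
        show "convex_on (convex hull V) (\<lambda>y. (\<beta> - c) + inner (a - b) y + A * (norm (y - z))\<^sup>2)"
          using quad_convex[of A] A0 convex_convex_hull by auto
        show "\<forall>y\<in>convex hull V. u y - w y = (\<beta> - c) + inner (a - b) y + A * (norm (y - z))\<^sup>2"
          using ab by (simp add: wdef inner_diff_left)
      qed
    qed
  qed
  then obtain x where xN: "x \<in> nodes T" and xmax: "\<forall>y\<in>mesh_domain T. u y - w y \<le> u x - w x"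
    by (auto simp: nodes_def mesh_domain_def)
  have "u x - w x \<le> 0"
  proof (cases "x \<in> inodes T")
    case False
    then have "u x = g x" "x \<in> bnodes T" using bnode_val[OF xN False S1ne] H0 xN by auto
    then show ?thesis using wg bn by auto
  next
    case True
    have xi: "x \<in> interior (mesh_domain T)" using interior_node[OF part True] by simp
    have xO: "x \<in> \<Omega>" using xi intD by blast
    have kx: "kk x > 0" using kpos xO by blast
    obtain U where U: "\<forall>y\<in>mesh_domain T. \<bar>u y\<bar> \<le> U"
    proof -
      have "compact (u ` mesh_domain T)"
        using Vh mb(3) by (intro compact_continuous_image) (auto simp: in_Vh_def)
      then obtain U where "\<forall>t\<in>u ` mesh_domain T. norm t \<le> U"
        using compact_imp_bounded bounded_iff by metis
      then show ?thesis using that by auto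
    qed
    have bdd: "bdd_above ((\<lambda>B. scheme_L F f g T kk B (u x) (mesh_ext T u) x) ` S1)"
    proof (rule bdd_aboveI2)
      fix B :: "real^'n^'n" assume B: "B \<in> S1"
      obtain sig lam where p: "ctrl_of F B = (sig, lam)" by (cases "ctrl_of F B")
      have pF: "(sig, lam) \<in> F" using cof B p by auto
      have lb: "\<And>j. lam$j$j \<ge> 0" "\<And>j. lam$j$j \<le> C" using Fdiag pF by auto
      let ?p = "\<lambda>j. x + kk x *\<^sub>R column j sig" and ?m = "\<lambda>j. x - kk x *\<^sub>R column j sig"
      have inD: "?p j \<in> mesh_domain T" "?m j \<in> mesh_domain T" for j
        using bspec[OF bspec[OF sten xi] pF] by auto
      have xD: "x \<in> mesh_domain T" using xi interior_subset by blast
      have tb: "- (lam$j$j * (mesh_ext T u (?m j) - 2 * u x + mesh_ext T u (?p j)) / (kk x)\<^sup>2)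
                 \<le> C * (4 * U) / (kk x)\<^sup>2" for j
      proof -
        have "\<bar>u (?m j)\<bar> \<le> U" "\<bar>u (?p j)\<bar> \<le> U" "\<bar>u x\<bar> \<le> U" using U inD xD by auto
        then have d: "- (u (?m j) - 2 * u x + u (?p j)) \<le> 4 * U" by linarith
        have U0: "0 \<le> U" using U xD by fastforce
        have "lam$j$j * (- (u (?m j) - 2 * u x + u (?p j))) \<le> C * (4 * U)"
          using mult_left_mono[OF d lb(1)[of j]] mult_right_mono[OF lb(2)[of j], of "4 * U"] U0 by linarith
        then have "- (lam$j$j * (u (?m j) - 2 * u x + u (?p j))) / (kk x)\<^sup>2 \<le> C * (4 * U) / (kk x)\<^sup>2"
          by (intro divide_right_mono) (auto simp: algebra_simps)
        then show ?thesis using inD[of j] by (simp add: stencil_ext)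
      qed
      have "- (\<Sum>j\<in>UNIV. lam$j$j * (mesh_ext T u (?m j) - 2 * u x + mesh_ext T u (?p j)) / (kk x)\<^sup>2)
           = (\<Sum>j\<in>UNIV. - (lam$j$j * (mesh_ext T u (?m j) - 2 * u x + mesh_ext T u (?p j)) / (kk x)\<^sup>2))"
        by (simp add: sum_negf)
      also have "\<dots> \<le> (\<Sum>j\<in>(UNIV::'n set). C * (4 * U) / (kk x)\<^sup>2)" by (rule sum_mono) (rule tb)
      finally have s: "- (\<Sum>j\<in>UNIV. lam$j$j * (mesh_ext T u (?m j) - 2 * u x + mesh_ext T u (?p j)) / (kk x)\<^sup>2)
          \<le> real CARD('n) * (C * (4 * U) / (kk x)\<^sup>2)" by simp
      have "f x * root CARD('n) (det B) \<le> \<bar>f x\<bar> * R"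
      proof -
        have "f x * root CARD('n) (det B) \<le> \<bar>f x\<bar> * \<bar>root CARD('n) (det B)\<bar>"
          by (simp add: abs_mult[symmetric])
        also have "\<dots> \<le> \<bar>f x\<bar> * R" using Rb B by (intro mult_left_mono) auto
        finally show ?thesis .
      qed
      then show "scheme_L F f g T kk B (u x) (mesh_ext T u) x \<le>
          real CARD('n) * (C * (4 * U) / (kk x)\<^sup>2) + \<bar>f x\<bar> * R"
        unfolding scheme_L_inode[OF True] p using s by simp
    qed
    have "2 * A \<le> scheme_L F f g T kk Bzero (u x) (mesh_ext T u) x"
    proof -
      obtain sig lam where p: "ctrl_of F Bzero = (sig, lam)" by (cases "ctrl_of F Bzero")
      have pF: "(sig, lam) \<in> F" and cm: "ctrl_map (sig, lam) = Bzero" using cof Bzero p by auto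
      have dg: "diagonal_mat lam" and lnn: "\<And>j. lam$j$j \<ge> 0" using Fdiag pF by auto
      have tr: "(\<Sum>j\<in>UNIV. lam$j$j * (norm (column j sig))\<^sup>2) = 1"
        using trace_ctrl[OF dg, of sig] cm Bzero by (simp add: ctrl_map_def S1_def)
      let ?p = "\<lambda>j. x + kk x *\<^sub>R column j sig" and ?m = "\<lambda>j. x - kk x *\<^sub>R column j sig"
      have inD: "?p j \<in> mesh_domain T" "?m j \<in> mesh_domain T" for j
        using bspec[OF bspec[OF sten xi] pF] by auto
      have tm: "lam$j$j * (mesh_ext T u (?m j) - 2 * u x + mesh_ext T u (?p j)) / (kk x)\<^sup>2
          \<le> lam$j$j * (- 2 * A * (norm (column j sig))\<^sup>2)" for j
      proof -
        have "u (?m j) - w (?m j) \<le> u x - w x" "u (?p j) - w (?p j) \<le> u x - w x"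
          using xmax inD by auto
        moreover have "w (?m j) - 2 * w x + w (?p j) = 2 * (-A) * (kk x)\<^sup>2 * (norm (column j sig))\<^sup>2"
          unfolding wdef using second_diff_quad[of c b x "kk x" "column j sig" "-A" z] by simp
        ultimately have "u (?m j) - 2 * u x + u (?p j) \<le> - 2 * A * (kk x)\<^sup>2 * (norm (column j sig))\<^sup>2"
          by linarith
        then have "(u (?m j) - 2 * u x + u (?p j)) / (kk x)\<^sup>2 \<le> - 2 * A * (norm (column j sig))\<^sup>2"
          using kx by (simp add: field_simps)
        from mult_left_mono[OF this lnn[of j]]
        show ?thesis using inD[of j] by (simp add: stencil_ext)
      qed
      have "(\<Sum>j\<in>UNIV. lam$j$j * (mesh_ext T u (?m j) - 2 * u x + mesh_ext T u (?p j)) / (kk x)\<^sup>2)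
          \<le> (\<Sum>j\<in>UNIV. lam$j$j * (- 2 * A * (norm (column j sig))\<^sup>2))"
        by (rule sum_mono) (rule tm)
      also have "\<dots> = - 2 * A * (\<Sum>j\<in>UNIV. lam$j$j * (norm (column j sig))\<^sup>2)"
        by (simp add: sum_distrib_left mult.left_commute)
      finally have S: "(\<Sum>j\<in>UNIV. lam$j$j * (mesh_ext T u (?m j) - 2 * u x + mesh_ext T u (?p j)) / (kk x)\<^sup>2)
          \<le> - 2 * A" using tr by simp
      have "0 \<le> f x * root CARD('n) (det Bzero)" using fpos xO Bzero(2) by simp
      then show ?thesis unfolding scheme_L_inode[OF True] p using S by simp
    qed
    also have "\<dots> \<le> scheme_H F f g T kk (u x) (mesh_ext T u) x"
      unfolding scheme_H_def by (rule cSUP_upper[OF Bzero(1) bdd])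
    finally show ?thesis using H0 xN A0 by auto
  qed
  then show ?thesis using xmax by auto
qed

lemma ctrl_facts:
  fixes F :: "((real^'n^'n) \<times> (real^'n^'n)) set"
  assumes "admissible_controls F C"
  shows "\<forall>B\<in>S1. ctrl_of F B \<in> F \<and> ctrl_map (ctrl_of F B) = B"
    "\<forall>(sig, lam)\<in>F. diagonal_mat lam \<and> (\<forall>j. lam$j$j \<ge> 0 \<and> lam$j$j \<le> C)"
    "S1 = ctrl_map ` F" "compact F"
proof -
  have bij: "bij_betw ctrl_map F S1" and cF: "compact F"
    and d: "\<forall>(sig, lam)\<in>F. diagonal_mat lam \<and> (\<forall>j. lam $ j $ j \<ge> 0) \<and> trace lam = C"
    using assms by (auto simp: admissible_controls_def)
  have inj: "inj_on ctrl_map F" and im: "ctrl_map ` F = S1" using bij by (auto simp: bij_betw_def)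
  show "\<forall>B\<in>S1. ctrl_of F B \<in> F \<and> ctrl_map (ctrl_of F B) = B"
    using inj im the_inv_into_into[OF inj] f_the_inv_into_f[OF inj] unfolding ctrl_of_def by auto
  show "S1 = ctrl_map ` F" using im by simp
  show "compact F" by (rule cF)
  show "\<forall>(sig, lam)\<in>F. diagonal_mat lam \<and> (\<forall>j. lam$j$j \<ge> 0 \<and> lam$j$j \<le> C)"
  proof (clarify)
    fix sig lam assume p: "(sig, lam) \<in> F"
    then have dl: "diagonal_mat lam" and nn: "\<And>j. lam$j$j \<ge> 0" and tr: "trace lam = C" using d by auto
    have "lam$j$j \<le> C" for j
    proof -
      have "lam$j$j \<le> (\<Sum>i\<in>UNIV. lam$i$i)" by (rule member_le_sum) (auto simp: nn)
      then show ?thesis using tr by (simp add: trace_def)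
    qed
    then show "diagonal_mat lam \<and> (\<forall>j. 0 \<le> lam $ j $ j \<and> lam $ j $ j \<le> C)" using dl nn by auto
  qed
qed

lemma scaleR_mv: "((c::real) *\<^sub>R (A :: real^'n^'m)) *v v = c *\<^sub>R (A *v v)"
  by (simp add: vec_eq_iff matrix_vector_mult_def sum_distrib_left mult.assoc)

lemma B0_in_S1:
  defines "B0 \<equiv> (1 / real CARD('n)) *\<^sub>R (mat 1 :: real^'n^'n)"
  shows "B0 \<in> S1" "det B0 \<ge> 0"
proof -
  have c: "1 / real CARD('n) \<ge> 0" by simp
  have "psd B0" unfolding psd_def B0_def
  proof
    show "transpose ((1 / real CARD('n)) *\<^sub>R (mat 1 :: real^'n^'n)) = (1 / real CARD('n)) *\<^sub>R mat 1"
      by (simp add: transpose_def mat_def vec_eq_iff)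
    show "\<forall>v. 0 \<le> v \<bullet> ((1 / real CARD('n)) *\<^sub>R (mat 1 :: real^'n^'n) *v v)"
    proof
      fix v :: "real^'n"
      have "(1 / real CARD('n)) *\<^sub>R (mat 1 :: real^'n^'n) *v v = (1 / real CARD('n)) *\<^sub>R v"
        by (simp add: scaleR_mv)
      then show "0 \<le> v \<bullet> ((1 / real CARD('n)) *\<^sub>R (mat 1 :: real^'n^'n) *v v)" by simp
    qed
  qed
  moreover have "trace B0 = 1" unfolding B0_def by (simp add: trace_def mat_def)
  ultimately show "B0 \<in> S1" by (simp add: S1_def)
  have "B0 = (\<chi> i. (1 / real CARD('n)) *s ((mat 1 :: real^'n^'n) $ i))"
    unfolding B0_def by (simp add: vec_eq_iff mat_def)
  then have "det B0 = (\<Prod>i\<in>(UNIV::'n set). 1 / real CARD('n)) * det (\<chi> i. (mat 1 :: real^'n^'n) $ i)"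
    using det_rows_mul[of "\<lambda>i. 1 / real CARD('n)" "\<lambda>i. (mat 1 :: real^'n^'n) $ i"] by simp
  also have "\<dots> = (1 / real CARD('n)) ^ CARD('n)" by simp
  finally show "det B0 \<ge> 0" by simp
qed


lemma det_ctrl_cont:
  "continuous_on (F :: ((real^'n^'n) \<times> (real^'n^'n)) set) (\<lambda>p. det (ctrl_map p))"
  unfolding det_def ctrl_map_def matrix_matrix_mult_def transpose_def
  by (intro continuous_intros) 

lemma det_bound:
  fixes F :: "((real^'n^'n) \<times> (real^'n^'n)) set"
  assumes "admissible_controls F C"
  shows "\<exists>R\<ge>0. \<forall>B\<in>(S1::(real^'n^'n) set). \<bar>root CARD('n) (det B)\<bar> \<le> R"
proof -
  note cf = ctrl_facts[OF assms]
  have "compact ((\<lambda>p. det (ctrl_map p)) ` F)"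
    by (rule compact_continuous_image[OF det_ctrl_cont cf(4)])
  then obtain D where D: "\<forall>t\<in>(\<lambda>p. det (ctrl_map p)) ` F. norm t \<le> D"
    using compact_imp_bounded bounded_iff by metis
  show ?thesis
  proof (intro exI conjI ballI)
    show "0 \<le> root CARD('n) (max D 0)" by simp
    fix B :: "real^'n^'n" assume "B \<in> S1"
    then obtain p where p: "p \<in> F" "B = ctrl_map p" using cf(3) by blast
    then have "\<bar>det B\<bar> \<le> max D 0" using D by auto
    then have "root CARD('n) \<bar>det B\<bar> \<le> root CARD('n) (max D 0)"
      by (intro real_root_le_mono) auto
    then show "\<bar>root CARD('n) (det B)\<bar> \<le> root CARD('n) (max D 0)"
      by (simp add: real_root_abs)
  qed
qed

lemma scd_basic:
  assumes "strictly_convex_domain \<Omega>"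
  shows "open \<Omega>" "bounded \<Omega>" "\<Omega> \<noteq> {}"
    "\<And>x y t. x \<in> closure \<Omega> \<Longrightarrow> y \<in> closure \<Omega> \<Longrightarrow> x \<noteq> y \<Longrightarrow> 0 < t \<Longrightarrow> t < 1 \<Longrightarrow> (1 - t) *\<^sub>R x + t *\<^sub>R y \<in> \<Omega>"
  using assms unfolding strictly_convex_domain_def by blast+

lemma scd_convex:
  assumes "strictly_convex_domain \<Omega>"
  shows "convex \<Omega>"
  unfolding convex_alt
proof (intro ballI allI impI)
  fix x y and u :: real assume xy: "x \<in> \<Omega>" "y \<in> \<Omega>" and u: "0 \<le> u \<and> u \<le> 1"
  show "(1 - u) *\<^sub>R x + u *\<^sub>R y \<in> \<Omega>"
  proof (cases "x = y \<or> u = 0 \<or> u = 1")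
    case True then show ?thesis using xy by (auto simp flip: scaleR_add_left)
  next
    case False
    then show ?thesis using scd_basic(4)[OF assms, of x y u] xy u closure_subset by auto
  qed
qed

lemma frontier_open_facts:
  assumes "open \<Omega>" "x0 \<in> frontier \<Omega>"
  shows "x0 \<in> closure \<Omega>" "x0 \<notin> \<Omega>"
  using assms by (auto simp: frontier_def interior_open)

lemma support_strict:
  fixes \<Omega> :: "(real^'n) set"
  assumes scd: "strictly_convex_domain \<Omega>" and x0: "x0 \<in> frontier \<Omega>"
  shows "\<exists>a. (\<forall>y\<in>closure \<Omega>. a \<bullet> x0 \<le> a \<bullet> y) \<and> (\<forall>y\<in>closure \<Omega>. y \<noteq> x0 \<longrightarrow> a \<bullet> x0 < a \<bullet> y)"
proof -
  note b = scd_basic[OF scd]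
  have cx: "convex \<Omega>" by (rule scd_convex[OF scd])
  note fo = frontier_open_facts[OF b(1) x0]
  have ri: "rel_interior \<Omega> = \<Omega>" using b(1) by (rule rel_interior_open)
  obtain a where a1: "\<And>y. y \<in> closure \<Omega> \<Longrightarrow> a \<bullet> x0 \<le> a \<bullet> y"
    and a2: "\<And>y. y \<in> rel_interior \<Omega> \<Longrightarrow> a \<bullet> x0 < a \<bullet> y"
    using supporting_hyperplane_relative_frontier[OF cx fo(1)] fo(2) ri by metis
  show ?thesis
  proof (intro exI conjI ballI impI)
    fix y assume "y \<in> closure \<Omega>" then show "a \<bullet> x0 \<le> a \<bullet> y" by (rule a1)
  next
    fix y assume y: "y \<in> closure \<Omega>" "y \<noteq> x0"
    have "(1 - 1/2) *\<^sub>R x0 + (1/2) *\<^sub>R y \<in> \<Omega>"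
      using b(4)[of x0 y "1/2"] fo(1) y by auto
    then have "a \<bullet> x0 < a \<bullet> ((1 - 1/2) *\<^sub>R x0 + (1/2) *\<^sub>R y)" using a2 ri by auto
    then show "a \<bullet> x0 < a \<bullet> y" by (simp add: inner_add_right)
  qed
qed

lemma frontier_sub_closure: "frontier S \<subseteq> closure S"
  by (simp add: frontier_closures)

lemma eta_exists:
  fixes \<Omega> :: "(real^'n) set"
  assumes scd: "strictly_convex_domain \<Omega>"
    and a: "\<forall>y\<in>closure \<Omega>. y \<noteq> x0 \<longrightarrow> a \<bullet> x0 < a \<bullet> y" and d: "\<delta> > 0"
  shows "\<exists>\<eta>>0. \<forall>y\<in>frontier \<Omega>. \<delta> \<le> dist y x0 \<longrightarrow> \<eta> \<le> a \<bullet> (y - x0)"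
proof -
  note b = scd_basic[OF scd]
  define K where "K = frontier \<Omega> \<inter> {y. \<delta> \<le> dist y x0}"
  have "closed {y. \<delta> \<le> dist y x0}"
    by (intro closed_Collect_le continuous_intros)
  then have "closed K" unfolding K_def by auto
  moreover have "bounded K" unfolding K_def using b(2)
    by (meson bounded_Int bounded_closure bounded_subset frontier_sub_closure)
  ultimately have cK: "compact K" by (simp add: compact_eq_bounded_closed)
  show ?thesis
  proof (cases "K = {}")
    case True then show ?thesis by (auto simp: K_def intro!: exI[of _ 1])
  next
    case False
    have "continuous_on K (\<lambda>y. a \<bullet> (y - x0))" by (intro continuous_intros)
    then obtain y1 where y1: "y1 \<in> K" "\<forall>y\<in>K. a \<bullet> (y1 - x0) \<le> a \<bullet> (y - x0)"
      using continuous_attains_inf[OF cK False] by blast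
    have "y1 \<noteq> x0" using y1(1) d by (auto simp: K_def)
    moreover have "y1 \<in> closure \<Omega>" using y1(1) frontier_sub_closure by (auto simp: K_def)
    ultimately have "0 < a \<bullet> (y1 - x0)" using a by (simp add: inner_diff_right)
    then show ?thesis using y1 by (auto simp: K_def)
  qed
qed

lemma near_inner_point:
  fixes \<Omega> :: "(real^'n) set"
  assumes scd: "strictly_convex_domain \<Omega>" and x0: "x0 \<in> frontier \<Omega>" and r: "r > 0"
  shows "\<exists>i>0. \<exists>z\<in>inner_layer \<Omega> i. dist z x0 < r"
proof -
  note b = scd_basic[OF scd]
  note fo = frontier_open_facts[OF b(1) x0]
  obtain c where c: "c \<in> \<Omega>" using b(3) by blast
  obtain \<rho> where \<rho>: "\<rho> > 0" "ball c \<rho> \<subseteq> \<Omega>" using b(1) c open_contains_ball by blast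
  define t where "t = min (1/2) (r / (2 * (norm (c - x0) + 1)))"
  have "0 < 2 * (norm (c - x0) + 1)" by (smt (verit) norm_ge_zero)
  then have "0 < r / (2 * (norm (c - x0) + 1))" using r by simp
  then have t0: "0 < t" "t < 1" by (auto simp: t_def)
  define z where "z = (1 - t) *\<^sub>R x0 + t *\<^sub>R c"
  have ball: "ball z (t * \<rho>) \<subseteq> \<Omega>"
  proof
    fix q assume "q \<in> ball z (t * \<rho>)"
    then have q: "norm (q - z) < t * \<rho>" by (simp add: dist_norm norm_minus_commute)
    define c' where "c' = c + (1 / t) *\<^sub>R (q - z)"
    have "norm (c' - c) = norm (q - z) / t" using t0 by (simp add: c'_def)
    also have "\<dots> < \<rho>" using q t0 by (simp add: field_simps)
    finally have "c' \<in> \<Omega>" using \<rho>(2) by (auto simp: dist_norm norm_minus_commute)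
    moreover have "q = (1 - t) *\<^sub>R x0 + t *\<^sub>R c'" using t0 by (simp add: c'_def z_def algebra_simps)
    moreover have "x0 \<noteq> c'" using fo(2) \<open>c' \<in> \<Omega>\<close> by auto
    ultimately show "q \<in> \<Omega>" using b(4)[OF fo(1), of c' t] closure_subset t0 by auto
  qed
  have zO: "z \<in> \<Omega>" using ball t0 \<rho>(1) by auto
  have inf: "t * \<rho> \<le> infdist z (frontier \<Omega>)"
  proof -
    have ne: "frontier \<Omega> \<noteq> {}" using x0 by auto
    have "t * \<rho> \<le> dist z f" if "f \<in> frontier \<Omega>" for f
    proof (rule ccontr)
      assume "\<not> t * \<rho> \<le> dist z f"
      then have "f \<in> \<Omega>" using ball by auto
      then show False using frontier_open_facts(2)[OF b(1) that] by simp
    qed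
    then show ?thesis unfolding infdist_notempty[OF ne] using ne by (intro cINF_greatest) auto
  qed
  obtain i :: nat where i: "1 / (t * \<rho>) < real i"
    using reals_Archimedean2 by blast
  have "0 < t * \<rho>" using t0 \<rho>(1) by simp
  then have i0: "i > 0" using i by (cases i) auto
  have "1 / real i < t * \<rho>" using i t0 \<rho>(1) i0
    by (simp add: field_simps)
  then have "z \<in> inner_layer \<Omega> i" using inf zO by (simp add: inner_layer_def)
  moreover have "dist z x0 < r"
  proof -
    have "z - x0 = t *\<^sub>R (c - x0)" by (simp add: z_def algebra_simps)
    then have "dist z x0 = t * norm (c - x0)" using t0 by (simp add: dist_norm)
    also have "\<dots> \<le> (r / (2 * (norm (c - x0) + 1))) * norm (c - x0)"
      by (intro mult_right_mono) (auto simp: t_def)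
    also have "\<dots> < r"
    proof -
      have n: "0 \<le> norm (c - x0)" by simp
      have "norm (c - x0) < 2 * (norm (c - x0) + 1)" using n by (smt (verit))
      from mult_strict_left_mono[OF this r]
      have "r * norm (c - x0) < r * (2 * (norm (c - x0) + 1))" .
      moreover have d: "0 < 2 * (norm (c - x0) + 1)" using n by (smt (verit))
      ultimately have "r * norm (c - x0) / (2 * (norm (c - x0) + 1)) < r"
        unfolding pos_divide_less_eq[OF d] by (simp add: mult.commute)
      then show ?thesis by (simp add: times_divide_eq_left)
    qed
    finally show ?thesis .
  qed
  ultimately show ?thesis using i0 by blast
qed

theorem lemma6p4:
  fixes \<Omega> :: "(real^'n) set"
    and f g :: "real^'n \<Rightarrow> real"
    and F :: "((real^'n^'n) \<times> (real^'n^'n)) set"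
    and C :: real
    and T :: "nat \<Rightarrow> (real^'n) set set"
    and k :: "nat \<Rightarrow> real^'n \<Rightarrow> real"
    and u :: "nat \<Rightarrow> real^'n \<Rightarrow> real"
  assumes dim: "CARD('n) \<ge> 2"
    and dom: "strictly_convex_domain \<Omega>"
    and f_nonneg: "\<forall>x\<in>\<Omega>. f x \<ge> 0"
    and f_bdd: "bounded (f ` \<Omega>)"
    and f_cont: "continuous_on \<Omega> f"
    and g_bdd: "bounded (g ` frontier \<Omega>)"
    and g_cont: "continuous_on (frontier \<Omega>) g"
    and ctrl: "admissible_controls F C"
    and mesh: "\<forall>m. simplicial_partition (T m)"
    and shape: "shape_regular T"
    and mesh_in: "\<forall>m. interior (mesh_domain (T m)) \<subseteq> \<Omega>"
    and bnodes_bd: "\<forall>m. bnodes (T m) \<subseteq> frontier \<Omega>"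
    and h_to_0: "(\<lambda>m. mesh_size (T m)) \<longlonglongrightarrow> 0"
    and k_pos: "\<forall>m. \<forall>x\<in>\<Omega>. k m x > 0"
    and k_stencil: "\<forall>m. \<forall>x\<in>interior (mesh_domain (T m)). \<forall>(sig, lam)\<in>F. \<forall>j.
                      x + k m x *\<^sub>R column j sig \<in> mesh_domain (T m) \<and>
                      x - k m x *\<^sub>R column j sig \<in> mesh_domain (T m)"
    and K1: "\<forall>i>0. \<forall>\<epsilon>>0. \<forall>\<^sub>F m in sequentially.
                \<forall>x\<in>inner_layer \<Omega> i.
                   x \<in> interior (mesh_domain (T m)) \<and> mesh_fun (T m) x / k m x \<le> \<epsilon>"
    and K2: "\<forall>i>0. \<exists>h'>0. \<forall>m. mesh_size (T m) < h' \<longrightarrow>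
                (\<exists>c. \<forall>x\<in>inner_layer \<Omega> i. k m x = c)"
    and K3: "\<forall>\<epsilon>>0. \<forall>\<^sub>F m in sequentially. \<forall>x\<in>\<Omega>. k m x \<le> \<epsilon>"
    and sol: "\<forall>m. discrete_solution F f g (T m) (k m) (u m)"
  shows "\<forall>x\<in>frontier \<Omega>.
           Limsup (sequentially \<times>\<^sub>F (inf (nhds x) (principal (closure \<Omega>))))
                  (\<lambda>(m, y). ereal (mesh_ext (T m) (u m) y)) = ereal (g x) \<and>
           Liminf (sequentially \<times>\<^sub>F (inf (nhds x) (principal (closure \<Omega>))))
                  (\<lambda>(m, y). ereal (mesh_ext (T m) (u m) y)) = ereal (g x)"
proof
  fix x0 assume x0: "x0 \<in> frontier \<Omega>"
  note b = scd_basic[OF dom]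
  note cf = ctrl_facts[OF ctrl]
  note fo = frontier_open_facts[OF b(1) x0]
  obtain R where R0: "R \<ge> 0" and R: "\<forall>B\<in>(S1::(real^'n^'n) set). \<bar>root CARD('n) (det B)\<bar> \<le> R"
    using det_bound[OF ctrl] by blast
  define B0 where "B0 = (1 / real CARD('n)) *\<^sub>R (mat 1 :: real^'n^'n)"
  have B0: "B0 \<in> S1" "det B0 \<ge> 0" unfolding B0_def by (rule B0_in_S1)+
  have S1ne: "(S1::(real^'n^'n) set) \<noteq> {}" using B0 by blast
  obtain M0 where M0: "\<forall>t\<in>f ` \<Omega>. norm t \<le> M0" using f_bdd bounded_iff by metis
  define M where "M = max M0 0"
  have M: "\<forall>x\<in>\<Omega>. \<bar>f x\<bar> \<le> M" "M \<ge> 0" using M0 by (auto simp: M_def)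
  define Q where "Q = M * R"
  have fQ: "\<forall>x\<in>\<Omega>. \<forall>B\<in>(S1::(real^'n^'n) set). f x * root CARD('n) (det B) \<le> Q"
  proof (intro ballI)
    fix x B assume x: "x \<in> \<Omega>" and B: "B \<in> (S1::(real^'n^'n) set)"
    have "f x * root CARD('n) (det B) \<le> \<bar>f x\<bar> * \<bar>root CARD('n) (det B)\<bar>"
      by (simp add: abs_mult[symmetric])
    also have "\<dots> \<le> M * R" using M x R B by (intro mult_mono) auto
    finally show "f x * root CARD('n) (det B) \<le> Q" by (simp add: Q_def)
  qed
  obtain G0 where G0: "\<forall>t\<in>g ` frontier \<Omega>. norm t \<le> G0" using g_bdd bounded_iff by metis
  define G where "G = max G0 0"
  have G: "\<forall>y\<in>frontier \<Omega>. \<bar>g y\<bar> \<le> G" "G \<ge> 0" using G0 by (auto simp: G_def)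
  obtain Rb0 where Rb0: "\<forall>y\<in>closure \<Omega>. dist x0 y \<le> Rb0"
    using bounded_any_center[of "closure \<Omega>" x0] b(2) bounded_closure by blast
  define Rb where "Rb = max Rb0 0"
  have Rb: "\<forall>y\<in>closure \<Omega>. norm (y - x0) \<le> Rb" "Rb \<ge> 0"
    using Rb0 by (auto simp: Rb_def dist_norm norm_minus_commute intro: le_max_iff_disj[THEN iffD2])
  obtain a where a1: "\<forall>y\<in>closure \<Omega>. a \<bullet> x0 \<le> a \<bullet> y"
    and a2: "\<forall>y\<in>closure \<Omega>. y \<noteq> x0 \<longrightarrow> a \<bullet> x0 < a \<bullet> y"
    using support_strict[OF dom x0] by blast
  have mfacts: "simplicial_partition (T m)" "in_Vh (T m) (u m)"
    "\<forall>x\<in>nodes (T m). scheme_H F f g (T m) (k m) (u m x) (mesh_ext (T m) (u m)) x = 0" for m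
    using mesh sol by (auto simp: discrete_solution_def)
  define \<phi> where "\<phi> = (\<lambda>p. mesh_ext (T (fst p)) (u (fst p)) (snd p))"
  let ?Fil = "sequentially \<times>\<^sub>F (inf (nhds x0) (principal (closure \<Omega>)))"
  have conv: "(\<phi> \<longlongrightarrow> g x0) ?Fil"
    unfolding tendsto_iff
  proof (intro allI impI)
    fix e :: real assume e: "e > 0"
    define \<epsilon> where "\<epsilon> = e / 4"
    have \<epsilon>: "\<epsilon> > 0" using e by (simp add: \<epsilon>_def)
    obtain \<delta>1 where \<delta>1: "\<delta>1 > 0" "\<forall>y\<in>frontier \<Omega>. dist y x0 < \<delta>1 \<longrightarrow> dist (g y) (g x0) < \<epsilon>"
      using g_cont x0 \<epsilon> unfolding continuous_on_iff by blast
    define A where "A = max Q 0 + 1"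
    have Q0: "0 \<le> Q" using M(2) R0 by (simp add: Q_def)
    have A: "A > 0" "Q < 2 * A" using Q0 by (auto simp: A_def)
    define \<delta> where "\<delta> = min \<delta>1 (min 1 (\<epsilon> / A))"
    have \<delta>: "\<delta> > 0" "\<delta> \<le> \<delta>1" "\<delta> \<le> 1" "\<delta> \<le> \<epsilon> / A" using \<delta>1 \<epsilon> A by (auto simp: \<delta>_def)
    have A\<delta>: "A * \<delta>\<^sup>2 \<le> \<epsilon>"
    proof -
      have "\<delta>\<^sup>2 \<le> \<delta>" using \<delta> by (simp add: power2_eq_square mult_le_cancel_left1)
      also have "\<dots> \<le> \<epsilon> / A" by (rule \<delta>(4))
      finally show ?thesis using A by (simp add: field_simps)
    qed
    obtain \<eta> where \<eta>: "\<eta> > 0" "\<forall>y\<in>frontier \<Omega>. \<delta> \<le> dist y x0 \<longrightarrow> \<eta> \<le> a \<bullet> (y - x0)"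
      using eta_exists[OF dom a2 \<delta>(1)] by blast
    define K where "K = (2 * G + A * Rb\<^sup>2) / \<eta>"
    have K: "K \<ge> 0" "K * \<eta> = 2 * G + A * Rb\<^sup>2" using \<eta> G A by (auto simp: K_def)
    define A' where "A' = \<epsilon> / (Rb\<^sup>2 + 1)"
    have A': "A' > 0" "A' * Rb\<^sup>2 \<le> \<epsilon>"
    proof -
      have Rb1: "0 < Rb\<^sup>2 + 1" by (smt (verit) zero_le_power2)
      show "A' > 0" using \<epsilon> Rb1 by (simp add: A'_def)
      have "A' * Rb\<^sup>2 \<le> A' * (Rb\<^sup>2 + 1)" using \<open>A' > 0\<close> by simp
      also have "\<dots> = \<epsilon>" using Rb1 by (simp add: A'_def)
      finally show "A' * Rb\<^sup>2 \<le> \<epsilon>" .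
    qed
    define v where "v = (\<lambda>y. (g x0 - \<epsilon> - A * \<delta>\<^sup>2 + K * (a \<bullet> x0)) + inner (- K *\<^sub>R a) y + A * (norm (y - x0))\<^sup>2)"
    define w where "w = (\<lambda>y. (g x0 + \<epsilon> + A' * Rb\<^sup>2 - K * (a \<bullet> x0)) + inner (K *\<^sub>R a) y - A' * (norm (y - x0))\<^sup>2)"
    have v_eq: "v y = g x0 - \<epsilon> - A * \<delta>\<^sup>2 - K * (a \<bullet> (y - x0)) + A * (norm (y - x0))\<^sup>2" for y
      by (simp add: v_def inner_diff_right algebra_simps)
    have w_eq: "w y = g x0 + \<epsilon> + A' * Rb\<^sup>2 + K * (a \<bullet> (y - x0)) - A' * (norm (y - x0))\<^sup>2" for y
      by (simp add: w_def inner_diff_right algebra_simps)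
    have vg: "\<forall>y\<in>frontier \<Omega>. v y \<le> g y"
    proof
      fix y assume y: "y \<in> frontier \<Omega>"
      have yc: "y \<in> closure \<Omega>" using y frontier_sub_closure by blast
      have ap: "0 \<le> a \<bullet> (y - x0)" using a1 yc by (simp add: inner_diff_right)
      have nb: "norm (y - x0) \<le> Rb" using Rb yc by blast
      then have nb2: "(norm (y - x0))\<^sup>2 \<le> Rb\<^sup>2" by (simp add: power_mono)
      show "v y \<le> g y"
      proof (cases "dist y x0 < \<delta>")
        case True
        then have "norm (y - x0) \<le> \<delta>" by (simp add: dist_norm)
        then have "(norm (y - x0))\<^sup>2 \<le> \<delta>\<^sup>2" by (simp add: power_mono)
        moreover have "dist (g y) (g x0) < \<epsilon>" using \<delta>1(2) y True \<delta>(2) by auto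
        ultimately have h1: "A * (norm (y - x0))\<^sup>2 \<le> A * \<delta>\<^sup>2" and h3: "g x0 - \<epsilon> < g y"
          using A(1) by (auto simp: dist_real_def abs_less_iff)
        have h2: "0 \<le> K * (a \<bullet> (y - x0))" using K(1) ap by simp
        show ?thesis unfolding v_eq using h1 h2 h3 by linarith
      next
        case False
        then have "\<eta> \<le> a \<bullet> (y - x0)" using \<eta>(2) y by auto
        then have "K * \<eta> \<le> K * (a \<bullet> (y - x0))" using K(1) by (rule mult_left_mono)
        moreover have "A * (norm (y - x0))\<^sup>2 \<le> A * Rb\<^sup>2" using nb2 A(1) by simp
        moreover have "\<bar>g y\<bar> \<le> G" "\<bar>g x0\<bar> \<le> G" using G y x0 by auto
        ultimately show ?thesis unfolding v_eq using K(2) \<epsilon> A(1) \<delta>(1)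
          by (smt (verit) zero_le_power2 mult_nonneg_nonneg)
      qed
    qed
    have wg: "\<forall>y\<in>frontier \<Omega>. g y \<le> w y"
    proof
      fix y assume y: "y \<in> frontier \<Omega>"
      have yc: "y \<in> closure \<Omega>" using y frontier_sub_closure by blast
      have ap: "0 \<le> a \<bullet> (y - x0)" using a1 yc by (simp add: inner_diff_right)
      have nb: "norm (y - x0) \<le> Rb" using Rb yc by blast
      then have nb2: "(norm (y - x0))\<^sup>2 \<le> Rb\<^sup>2" by (simp add: power_mono)
      then have wq: "A' * (norm (y - x0))\<^sup>2 \<le> A' * Rb\<^sup>2" using A'(1) by simp
      have Ka: "0 \<le> K * (a \<bullet> (y - x0))" using K(1) ap by simp
      show "g y \<le> w y"
      proof (cases "dist y x0 < \<delta>")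
        case True
        have "dist (g y) (g x0) < \<epsilon>" using \<delta>1(2) y True \<delta>(2) by auto
        then show ?thesis unfolding w_eq using wq Ka by (simp add: dist_real_def abs_less_iff)
      next
        case False
        then have "\<eta> \<le> a \<bullet> (y - x0)" using \<eta>(2) y by auto
        then have "K * \<eta> \<le> K * (a \<bullet> (y - x0))" using K(1) by (rule mult_left_mono)
        moreover have "\<bar>g y\<bar> \<le> G" "\<bar>g x0\<bar> \<le> G" using G y x0 by auto
        moreover have "0 \<le> A * Rb\<^sup>2" using A(1) by simp
        ultimately show ?thesis unfolding w_eq using K(2) \<epsilon> wq by linarith
      qed
    qed
    have low: "\<forall>p\<in>mesh_domain (T m). v p \<le> u m p" for m
      by (rule lower_cmp[where \<Omega>=\<Omega> and v=v and c="g x0 - \<epsilon> - A * \<delta>\<^sup>2 + K * (a \<bullet> x0)" and b="- K *\<^sub>R a" and A=A and z=x0 and Q=Q, OF mfacts(1,2,3)[of m]])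
         (use k_pos k_stencil mesh_in bnodes_bd S1ne cf fQ A vg in \<open>auto simp: v_def\<close>)
    have up: "\<forall>p\<in>mesh_domain (T m). u m p \<le> w p" for m
      by (rule upper_cmp[where \<Omega>=\<Omega> and w=w and C=C and c="g x0 + \<epsilon> + A' * Rb\<^sup>2 - K * (a \<bullet> x0)" and b="K *\<^sub>R a" and A=A' and z=x0 and Bzero=B0 and R=R, OF mfacts(1,2,3)[of m]])
         (use k_pos k_stencil mesh_in bnodes_bd S1ne cf A' f_nonneg B0 R wg in \<open>auto simp: w_def\<close>)
    define r where "r = \<epsilon> / (3 * (K * norm a + 1))"
    have Kna: "0 \<le> K * norm a" using K(1) by simp
    have r: "r > 0" "3 * r * (K * norm a) \<le> \<epsilon>"
    proof -
      have d: "0 < 3 * (K * norm a + 1)" using Kna by (smt (verit))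
      show "r > 0" using \<epsilon> d by (simp add: r_def)
      have "3 * r * (K * norm a) \<le> 3 * r * (K * norm a + 1)" using \<open>r > 0\<close> by simp
      also have "\<dots> = \<epsilon>" unfolding r_def using d by (simp add: field_simps)
      finally show "3 * r * (K * norm a) \<le> \<epsilon>" .
    qed
    obtain i z where iz: "i > 0" "z \<in> inner_layer \<Omega> i" "dist z x0 < r"
      using near_inner_point[OF dom x0 r(1)] by blast
    have "\<forall>\<^sub>F m in sequentially. \<forall>x\<in>inner_layer \<Omega> i.
                   x \<in> interior (mesh_domain (T m)) \<and> mesh_fun (T m) x / k m x \<le> 1"
      using K1 iz(1) by simp
    then obtain N where N: "\<And>m. N \<le> m \<Longrightarrow> z \<in> interior (mesh_domain (T m))"
      using iz(2) unfolding eventually_sequentially by blast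
    have pt: "dist (\<phi> (m, y)) (g x0) < e" if m: "N \<le> m" and y: "y \<in> closure \<Omega>" "dist y x0 < r" for m y
    proof -
      have zD: "z \<in> mesh_domain (T m)" using N[OF m] interior_subset by blast
      have cD: "closed (mesh_domain (T m))" using mesh_basic(3)[OF mfacts(1)] compact_imp_closed by blast
      define p where "p = closest_point (mesh_domain (T m)) y"
      have pD: "p \<in> mesh_domain (T m)" unfolding p_def using closest_point_exists(1)[OF cD] zD by blast
      have "dist y p \<le> dist y z" unfolding p_def using closest_point_le[OF cD zD] .
      also have "\<dots> \<le> dist y x0 + dist z x0" by (simp add: dist_triangle2)
      finally have "dist p x0 < 3 * r" using y(2) iz(3) dist_triangle[of p x0 y] by (simp add: dist_commute)
      then have np: "norm (p - x0) \<le> 3 * r" by (simp add: dist_norm)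
      have "\<bar>a \<bullet> (p - x0)\<bar> \<le> norm a * norm (p - x0)" by (rule Cauchy_Schwarz_ineq2)
      also have "\<dots> \<le> norm a * (3 * r)" using np by (simp add: mult_left_mono)
      finally have "K * \<bar>a \<bullet> (p - x0)\<bar> \<le> K * (norm a * (3 * r))" using K(1) by (simp add: mult_left_mono)
      moreover have e1: "\<bar>K * (a \<bullet> (p - x0))\<bar> = K * \<bar>a \<bullet> (p - x0)\<bar>" using K(1) by (simp add: abs_mult)
      moreover have e2: "K * (norm a * (3 * r)) = 3 * r * (K * norm a)" by (simp add: algebra_simps)
      ultimately have Kb: "\<bar>K * (a \<bullet> (p - x0))\<bar> \<le> \<epsilon>" using r(2) by linarith
      have "\<phi> (m, y) = u m p" by (simp add: \<phi>_def mesh_ext_def p_def)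
      moreover have "v p \<le> u m p" "u m p \<le> w p" using low up pD by auto
      moreover have "0 \<le> A * (norm (p - x0))\<^sup>2" "0 \<le> A' * (norm (p - x0))\<^sup>2" using A(1) A'(1) by simp_all
      ultimately show ?thesis unfolding v_eq w_eq dist_real_def using Kb A\<delta> A'(2) \<epsilon> by (simp add: \<epsilon>_def abs_le_iff)
    qed
    show "\<forall>\<^sub>F p in ?Fil. dist (\<phi> p) (g x0) < e"
      unfolding eventually_prod_filter
    proof (intro exI conjI allI impI)
      show "eventually (\<lambda>m. N \<le> m) sequentially" by (rule eventually_ge_at_top)
      show "eventually (\<lambda>y. y \<in> closure \<Omega> \<and> dist y x0 < r) (inf (nhds x0) (principal (closure \<Omega>)))"
        unfolding eventually_inf_principal eventually_nhds_metric using r(1) by auto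
      fix m y assume "N \<le> m" "y \<in> closure \<Omega> \<and> dist y x0 < r"
      then show "dist (\<phi> (m, y)) (g x0) < e" using pt by blast
    qed
  qed
  have ntriv: "\<not> trivial_limit ?Fil"
  proof
    assume "trivial_limit ?Fil"
    then have "?Fil = bot" by (simp add: trivial_limit_def)
    moreover have "inf (nhds x0) (principal (closure \<Omega>)) \<noteq> bot"
    proof
      assume "inf (nhds x0) (principal (closure \<Omega>)) = bot"
      then have "eventually (\<lambda>y. False) (inf (nhds x0) (principal (closure \<Omega>)))" by simp
      then obtain d where "d > 0" "\<forall>y. dist y x0 < d \<longrightarrow> y \<in> closure \<Omega> \<longrightarrow> False"
        unfolding eventually_inf_principal eventually_nhds_metric by blast
      then show False using fo(1) by auto
    qed
    ultimately show False by (simp add: prod_filter_eq_bot)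
  qed
  have feq: "(\<lambda>(m, y). ereal (mesh_ext (T m) (u m) y)) = (\<lambda>p. ereal (\<phi> p))"
    by (auto simp: \<phi>_def fun_eq_iff)
  have lim: "((\<lambda>(m, y). ereal (mesh_ext (T m) (u m) y)) \<longlongrightarrow> ereal (g x0)) ?Fil"
    unfolding feq using conv by (rule tendsto_ereal)
  show "Limsup ?Fil (\<lambda>(m, y). ereal (mesh_ext (T m) (u m) y)) = ereal (g x0) \<and>
        Liminf ?Fil (\<lambda>(m, y). ereal (mesh_ext (T m) (u m) y)) = ereal (g x0)"
    using lim_imp_Limsup[OF ntriv lim] lim_imp_Liminf[OF ntriv lim] by simp
qed

end
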